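(* Let $S$ and $T$ be semigroups such that for each $b\in T$ there exist $a\in S$ and a homomorphism $\phi:S\to T$ with $a\phi=b$ and $\mathbf{r}_S(a)\phi=\mathbf{r}_T(b)$, where $\mathbf{r}_S(a)\phi=\{(s\phi,t\phi)\mid (s,t)\in\mathbf{r}_S(a)\}$. If $S$ is finitely right equated then so is $T$.
   Context: For a semigroup $S$ and $a\in S$, $\mathbf{r}_S(a)=\{(s,t)\in S\times S\mid as=at\}$; $S$ is finitely right equated if each $\mathbf{r}_S(a)$ is finitely generated as a right congruence. *)

theory Defs
  imports Main
begin

text \<open>Semigroups are modelled as types of class semigroup_mult (the whole type is the semigroup).\<close>

definition sg_hom :: "('a::semigroup_mult \<Rightarrow> 'b::semigroup_mult) \<Rightarrow> bool" where
  "sg_hom \<phi> \<longleftrightarrow> (\<forall>x y. \<phi> (x * y) = \<phi> x * \<phi> y)"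

definition right_congruence :: "('a::semigroup_mult \<times> 'a) set \<Rightarrow> bool" where
  "right_congruence \<rho> \<longleftrightarrow> equiv UNIV \<rho> \<and> (\<forall>s t u. (s, t) \<in> \<rho> \<longrightarrow> (s * u, t * u) \<in> \<rho>)"

definition rcong_gen :: "('a::semigroup_mult \<times> 'a) set \<Rightarrow> ('a \<times> 'a) set" where
  "rcong_gen X = \<Inter> {\<rho>. right_congruence \<rho> \<and> X \<subseteq> \<rho>}"

definition fg_right_congruence :: "('a::semigroup_mult \<times> 'a) set \<Rightarrow> bool" where
  "fg_right_congruence \<rho> \<longleftrightarrow> right_congruence \<rho> \<and> (\<exists>X. finite X \<and> rcong_gen X = \<rho>)"

definition r_ann :: "'a::semigroup_mult \<Rightarrow> ('a \<times> 'a) set" where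
  "r_ann a = {(s, t). a * s = a * t}"

definition finitely_right_equated :: "'a::semigroup_mult itself \<Rightarrow> bool" where
  "finitely_right_equated _ \<longleftrightarrow> (\<forall>a::'a. fg_right_congruence (r_ann a))"

end

theory Submission
  imports Defs
begin
lemma rc_iff: "right_congruence \<rho> \<longleftrightarrow> (\<forall>x. (x,x) \<in> \<rho>) \<and> (\<forall>x y. (x,y) \<in> \<rho> \<longrightarrow> (y,x) \<in> \<rho>)
   \<and> (\<forall>x y z. (x,y) \<in> \<rho> \<longrightarrow> (y,z) \<in> \<rho> \<longrightarrow> (x,z) \<in> \<rho>) \<and> (\<forall>s t u. (s, t) \<in> \<rho> \<longrightarrow> (s * u, t * u) \<in> \<rho>)"
  unfolding right_congruence_def equiv_def refl_on_def sym_def trans_def by auto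

lemma rcI:
  assumes "\<And>x. (x,x) \<in> \<rho>" "\<And>x y. (x,y) \<in> \<rho> \<Longrightarrow> (y,x) \<in> \<rho>"
    "\<And>x y z. (x,y) \<in> \<rho> \<Longrightarrow> (y,z) \<in> \<rho> \<Longrightarrow> (x,z) \<in> \<rho>"
    "\<And>s t u. (s, t) \<in> \<rho> \<Longrightarrow> (s * u, t * u) \<in> \<rho>"
  shows "right_congruence \<rho>"
  using assms unfolding rc_iff by blast

lemma rcR: "right_congruence \<rho> \<Longrightarrow> (x,x) \<in> \<rho>" unfolding rc_iff by blast
lemma rcS: "right_congruence \<rho> \<Longrightarrow> (x,y) \<in> \<rho> \<Longrightarrow> (y,x) \<in> \<rho>" unfolding rc_iff by blast
lemma rcT: "right_congruence \<rho> \<Longrightarrow> (x,y) \<in> \<rho> \<Longrightarrow> (y,z) \<in> \<rho> \<Longrightarrow> (x,z) \<in> \<rho>" unfolding rc_iff by blast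
lemma rcC: "right_congruence \<rho> \<Longrightarrow> (s,t) \<in> \<rho> \<Longrightarrow> (s*u,t*u) \<in> \<rho>" unfolding rc_iff by blast

lemma rc_Inter:
  fixes X :: "('a::semigroup_mult \<times> 'a) set"
  shows "right_congruence (rcong_gen X)"
  unfolding rcong_gen_def
proof (rule rcI)
  fix x show "(x,x) \<in> \<Inter>{\<rho>. right_congruence \<rho> \<and> X \<subseteq> \<rho>}"
    by (rule InterI) (simp add: rcR)
next
  fix x y assume a: "(x,y) \<in> \<Inter>{\<rho>. right_congruence \<rho> \<and> X \<subseteq> \<rho>}"
  show "(y,x) \<in> \<Inter>{\<rho>. right_congruence \<rho> \<and> X \<subseteq> \<rho>}"
  proof (rule InterI)
    fix \<rho> assume b: "\<rho> \<in> {\<rho>. right_congruence \<rho> \<and> X \<subseteq> \<rho>}"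
    have "(x,y) \<in> \<rho>" using InterD[OF a b] .
    with b show "(y,x) \<in> \<rho>" using rcS by blast
  qed
next
  fix x y z assume a: "(x,y) \<in> \<Inter>{\<rho>. right_congruence \<rho> \<and> X \<subseteq> \<rho>}" and a2: "(y,z) \<in> \<Inter>{\<rho>. right_congruence \<rho> \<and> X \<subseteq> \<rho>}"
  show "(x,z) \<in> \<Inter>{\<rho>. right_congruence \<rho> \<and> X \<subseteq> \<rho>}"
  proof (rule InterI)
    fix \<rho> assume b: "\<rho> \<in> {\<rho>. right_congruence \<rho> \<and> X \<subseteq> \<rho>}"
    have "right_congruence \<rho>" using b by simp
    then show "(x,z) \<in> \<rho>" using rcT InterD[OF a b] InterD[OF a2 b] by metis
  qed
next
  fix s t u assume a: "(s,t) \<in> \<Inter>{\<rho>. right_congruence \<rho> \<and> X \<subseteq> \<rho>}"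
  show "(s*u,t*u) \<in> \<Inter>{\<rho>. right_congruence \<rho> \<and> X \<subseteq> \<rho>}"
  proof (rule InterI)
    fix \<rho> assume b: "\<rho> \<in> {\<rho>. right_congruence \<rho> \<and> X \<subseteq> \<rho>}"
    have "(s,t) \<in> \<rho>" using InterD[OF a b] .
    with b show "(s*u,t*u) \<in> \<rho>" using rcC by blast
  qed
qed

lemma rc_least: "right_congruence \<rho> \<Longrightarrow> X \<subseteq> \<rho> \<Longrightarrow> rcong_gen X \<subseteq> \<rho>"
  unfolding rcong_gen_def by blast

lemma rc_sub: "X \<subseteq> rcong_gen X"
  unfolding rcong_gen_def by blast

lemma rann_rc: "right_congruence (r_ann (b::'a::semigroup_mult))"
  by (rule rcI) (auto simp: r_ann_def mult.assoc[symmetric])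

lemma preimage_rc:
  assumes h: "sg_hom \<phi>" and r: "right_congruence \<rho>"
  shows "right_congruence {(s,t). (\<phi> s, \<phi> t) \<in> \<rho>}"
proof -
  have hm: "\<And>x y. \<phi> (x * y) = \<phi> x * \<phi> y" using h unfolding sg_hom_def by blast
  show ?thesis
  proof (rule rcI)
    fix x show "(x,x) \<in> {(s,t). (\<phi> s, \<phi> t) \<in> \<rho>}" using rcR[OF r] by simp
  next
    fix x y assume "(x,y) \<in> {(s,t). (\<phi> s, \<phi> t) \<in> \<rho>}"
    then show "(y,x) \<in> {(s,t). (\<phi> s, \<phi> t) \<in> \<rho>}" using rcS[OF r] by simp
  next
    fix x y z assume "(x,y) \<in> {(s,t). (\<phi> s, \<phi> t) \<in> \<rho>}" "(y,z) \<in> {(s,t). (\<phi> s, \<phi> t) \<in> \<rho>}"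
    then show "(x,z) \<in> {(s,t). (\<phi> s, \<phi> t) \<in> \<rho>}" using rcT[OF r] by simp
  next
    fix x y u assume "(x,y) \<in> {(s,t). (\<phi> s, \<phi> t) \<in> \<rho>}"
    then show "(x*u,y*u) \<in> {(s,t). (\<phi> s, \<phi> t) \<in> \<rho>}" using rcC[OF r] by (simp add: hm)
  qed
qed

theorem mainTheorem15:
  assumes "\<forall>b::'b::semigroup_mult. \<exists>(a::'a::semigroup_mult) \<phi>. sg_hom \<phi> \<and> \<phi> a = b \<and>
             (\<lambda>(s, t). (\<phi> s, \<phi> t)) ` r_ann a = r_ann b"
    and "finitely_right_equated TYPE('a)"
  shows "finitely_right_equated TYPE('b)"
  unfolding finitely_right_equated_def
proof
  fix b :: 'b
  obtain a :: 'a and \<phi> where h: "sg_hom \<phi>" and im: "(\<lambda>(s, t). (\<phi> s, \<phi> t)) ` r_ann a = r_ann b"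
    using assms(1) by blast
  obtain X where fX: "finite X" and gX: "rcong_gen X = r_ann a"
    using assms(2) unfolding finitely_right_equated_def fg_right_congruence_def by blast
  let ?Y = "(\<lambda>(s, t). (\<phi> s, \<phi> t)) ` X"
  have "?Y \<subseteq> r_ann b" using rc_sub[of X] gX im by blast
  then have "rcong_gen ?Y \<subseteq> r_ann b"
    by (rule rc_least[OF rann_rc])
  moreover have "r_ann b \<subseteq> rcong_gen ?Y"
  proof -
    have "X \<subseteq> {(s,t). (\<phi> s, \<phi> t) \<in> rcong_gen ?Y}"
      using rc_sub[of ?Y] by auto
    then have "rcong_gen X \<subseteq> {(s,t). (\<phi> s, \<phi> t) \<in> rcong_gen ?Y}"
      by (rule rc_least[OF preimage_rc[OF h rc_Inter]])
    then have "r_ann a \<subseteq> {(s,t). (\<phi> s, \<phi> t) \<in> rcong_gen ?Y}" using gX by simp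
    then have "(\<lambda>(s, t). (\<phi> s, \<phi> t)) ` r_ann a \<subseteq> rcong_gen ?Y" by auto
    then show ?thesis using im by simp
  qed
  ultimately have "rcong_gen ?Y = r_ann b" by blast
  then show "fg_right_congruence (r_ann b)"
    unfolding fg_right_congruence_def using rann_rc fX by blast
qed
end
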